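(* Let $\vec B$ be a binary digit vector with scale factor $N$ and cumulative digit function $g$. Then $F_{\vec B}(k/N)=g(k)/\|\vec B\|$ for all $k\in\{0,\dots,N\}$.
   Context: A binary digit vector of length (scale factor) $N\ge3$ is $\vec B=(b_0,\dots,b_{N-1})\in\{0,1\}^N$ with $2\le\|\vec B\|:=\sum_i b_i\le N-1$; its digit set is $D=\{i:b_i=1\}$. With $\phi_d(x)=(x+d)/N$ for $d\in D$, let $\mu_{\vec B}$ be the unique Borel probability measure with $\mu_{\vec B}=\frac{1}{\|\vec B\|}\sum_{d\in D}\mu_{\vec B}\circ\phi_d^{-1}$, supported on the attractor $C_{\vec B}\subset[0,1]$. The CDF is $F_{\vec B}(x)=\mu_{\vec B}([0,x])$. The cumulative digit function is $g(0)=0$, $g(i)=\sum_{j=0}^{i-1}b_j$ for $1\le i\le N$. *)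

theory Defs
  imports "HOL-Probability.Probability"
begin

text \<open>A digit vector of length N is represented by b :: nat => nat, only b 0, ..., b (N-1) matter.\<close>

definition digit_norm :: "nat \<Rightarrow> (nat \<Rightarrow> nat) \<Rightarrow> nat" where
  "digit_norm N b = (\<Sum>i<N. b i)"

definition digit_set :: "nat \<Rightarrow> (nat \<Rightarrow> nat) \<Rightarrow> nat set" where
  "digit_set N b = {i. i < N \<and> b i = 1}"

definition binary_digit_vector :: "nat \<Rightarrow> (nat \<Rightarrow> nat) \<Rightarrow> bool" where
  "binary_digit_vector N b \<longleftrightarrow> 3 \<le> N \<and> (\<forall>i<N. b i \<in> {0, 1})
     \<and> 2 \<le> digit_norm N b \<and> digit_norm N b \<le> N - 1"

definition cum_digit :: "(nat \<Rightarrow> nat) \<Rightarrow> nat \<Rightarrow> nat" where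
  "cum_digit b i = (\<Sum>j<i. b j)"

definition ifs_map :: "nat \<Rightarrow> nat \<Rightarrow> real \<Rightarrow> real" where
  "ifs_map N d x = (x + real d) / real N"

definition self_similar_measure :: "nat \<Rightarrow> (nat \<Rightarrow> nat) \<Rightarrow> real measure \<Rightarrow> bool" where
  "self_similar_measure N b \<mu> \<longleftrightarrow> sets \<mu> = sets borel \<and> prob_space \<mu> \<and>
     (\<forall>A \<in> sets borel. emeasure \<mu> A =
        (\<Sum>d\<in>digit_set N b. emeasure (distr \<mu> borel (ifs_map N d)) A) / of_nat (digit_norm N b))"

definition digit_cdf :: "real measure \<Rightarrow> real \<Rightarrow> real" where
  "digit_cdf \<mu> x = measure \<mu> {0..x}"

end

theory Submission
  imports Defs
begin

lemma ss_measure_eq: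
  assumes bv: "binary_digit_vector N b"
    and ss: "self_similar_measure N b \<mu>"
    and A: "A \<in> sets borel"
  shows "measure \<mu> A = (\<Sum>d\<in>digit_set N b. measure \<mu> (ifs_map N d -` A)) / real (digit_norm N b)"
proof -
  interpret P: prob_space \<mu> using ss unfolding self_similar_measure_def by auto
  have sets: "sets \<mu> = sets borel" using ss unfolding self_similar_measure_def by auto
  have sp: "space \<mu> = UNIV" using sets_eq_imp_space_eq[OF sets] by simp
  have m: "digit_norm N b \<ge> 2" using bv unfolding binary_digit_vector_def by auto
  have meas: "ifs_map N d \<in> borel_measurable \<mu>" for d
  proof -
    have "ifs_map N d \<in> borel_measurable borel" unfolding ifs_map_def by measurable
    thus ?thesis using measurable_cong_sets[OF sets refl] by blast
  qed
  have pre: "ifs_map N d -` A \<in> sets \<mu>" for d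
    using measurable_sets[OF meas A] sp by simp
  have e: "emeasure (distr \<mu> borel (ifs_map N d)) A = ennreal (measure \<mu> (ifs_map N d -` A))" for d
    using emeasure_distr[OF meas A] sp P.emeasure_eq_measure by simp
  have "emeasure \<mu> A = (\<Sum>d\<in>digit_set N b. emeasure (distr \<mu> borel (ifs_map N d)) A) / of_nat (digit_norm N b)"
    using ss A unfolding self_similar_measure_def by auto
  also have "\<dots> = ennreal ((\<Sum>d\<in>digit_set N b. measure \<mu> (ifs_map N d -` A)) / real (digit_norm N b))"
    using m by (simp add: e sum_ennreal ennreal_of_nat_eq_real_of_nat divide_ennreal sum_nonneg)
  finally have "ennreal (measure \<mu> A) = ennreal ((\<Sum>d\<in>digit_set N b. measure \<mu> (ifs_map N d -` A)) / real (digit_norm N b))"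
    using P.emeasure_eq_measure by simp
  thus ?thesis by (subst (asm) ennreal_inj) (auto intro!: sum_nonneg divide_nonneg_nonneg)
qed

theorem lemma2p2:
  fixes N :: nat and b :: "nat \<Rightarrow> nat" and \<mu> :: "real measure"
  assumes "binary_digit_vector N b"
    and "self_similar_measure N b \<mu>"
    and "emeasure \<mu> {0..1} = 1"
  shows "\<forall>k \<le> N. digit_cdf \<mu> (real k / real N) = real (cum_digit b k) / real (digit_norm N b)"
proof (intro allI impI)
  fix k assume kN: "k \<le> N"
  note bv = assms(1) and ss = assms(2)
  interpret P: prob_space \<mu> using ss unfolding self_similar_measure_def by auto
  have sets: "sets \<mu> = sets borel" using ss unfolding self_similar_measure_def by auto
  have sp: "space \<mu> = UNIV" using sets_eq_imp_space_eq[OF sets] by simp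
  have N3: "N \<ge> 3" and m2: "digit_norm N b \<ge> 2" and b01: "\<And>i. i < N \<Longrightarrow> b i \<in> {0,1}"
    using bv unfolding binary_digit_vector_def by auto
  have I1: "measure \<mu> {0..1} = 1" using assms(3) P.emeasure_eq_measure by simp
  have restr: "measure \<mu> S = measure \<mu> (S \<inter> {0..1})" if "S \<in> sets borel" for S
  proof -
    have "measure \<mu> (S \<inter> {0..1}) = measure \<mu> S"
    proof (rule measure_eq_AE)
      have "AE x in \<mu>. x \<in> {0..1::real}"
        by (rule P.AE_prob_1) (use I1 sets in auto)
      thus "AE x in \<mu>. (x \<in> S \<inter> {0..1}) = (x \<in> S)" by eventually_elim auto
    qed (use sets that in auto)
    thus ?thesis by simp
  qed
  define D where "D = digit_set N b"
  define m where "m = digit_norm N b"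
  have finD: "finite D" unfolding D_def digit_set_def by auto
  have pre0: "ifs_map N d -` {0} = {- real d}" for d
    unfolding ifs_map_def using N3 by (auto simp: field_simps)
  have single: "measure \<mu> {- real d} = (if d = 0 then measure \<mu> {0} else 0)" for d
  proof -
    have "measure \<mu> {- real d} = measure \<mu> ({- real d} \<inter> {0..1})" by (rule restr) simp
    thus ?thesis by (cases "d = 0") auto
  qed
  have z: "measure \<mu> {0} = 0"
  proof -
    have "measure \<mu> {0} = (\<Sum>d\<in>D. measure \<mu> (ifs_map N d -` {0})) / real m"
      unfolding D_def m_def by (rule ss_measure_eq[OF bv ss]) simp
    also have "(\<Sum>d\<in>D. measure \<mu> (ifs_map N d -` {0})) = (\<Sum>d\<in>D. if d = 0 then measure \<mu> {0} else 0)"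
      by (simp add: pre0 single)
    also have "\<dots> = (if 0 \<in> D then measure \<mu> {0} else 0)"
      using finD by (simp add: sum.delta)
    finally have "measure \<mu> {0} = (if 0 \<in> D then measure \<mu> {0} else 0) / real m" .
    moreover have "real m \<ge> 2" using m2 unfolding m_def by simp
    moreover have "measure \<mu> {0} \<ge> 0" by simp
    ultimately show ?thesis by (cases "0 \<in> D") (auto simp: field_simps)
  qed
  have preI: "ifs_map N d -` {0..real k / real N} = {- real d .. real k - real d}" for d
  proof -
    have Np: "real N > 0" using N3 by simp
    have "(x + real d) / real N \<le> real k / real N \<longleftrightarrow> x + real d \<le> real k" for x
      using Np by (simp add: divide_right_mono_neg divide_le_cancel)
    moreover have "0 \<le> (x + real d) / real N \<longleftrightarrow> 0 \<le> x + real d" for x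
      using Np by (simp add: zero_le_divide_iff)
    ultimately show ?thesis unfolding ifs_map_def by auto
  qed
  have tm: "measure \<mu> (ifs_map N d -` {0..real k / real N}) = (if d < k then 1 else 0)" for d
  proof -
    have "measure \<mu> (ifs_map N d -` {0..real k / real N}) = measure \<mu> ({- real d .. real k - real d} \<inter> {0..1})"
      unfolding preI by (rule restr) simp
    also have "\<dots> = (if d < k then 1 else 0)"
    proof (cases "d < k")
      case True
      hence "{- real d .. real k - real d} \<inter> {0..1} = {0..1}" by auto
      thus ?thesis using True I1 by simp
    next
      case False
      show ?thesis
      proof (cases "d = k")
        case True
        hence "{- real d .. real k - real d} \<inter> {0..1} = {0}" by auto
        thus ?thesis using z False by simp
      next
        case F2: False
        hence "{- real d .. real k - real d} \<inter> {0..1} = {}" using False by auto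
        thus ?thesis using False by simp
      qed
    qed
    finally show ?thesis .
  qed
  have "digit_cdf \<mu> (real k / real N) = (\<Sum>d\<in>D. measure \<mu> (ifs_map N d -` {0..real k / real N})) / real m"
    unfolding digit_cdf_def D_def m_def by (rule ss_measure_eq[OF bv ss]) simp
  also have "(\<Sum>d\<in>D. measure \<mu> (ifs_map N d -` {0..real k / real N})) = real (card {d\<in>D. d < k})"
    using finD by (simp add: tm sum.If_cases Int_def)
  also have "card {d\<in>D. d < k} = cum_digit b k"
  proof -
    have "cum_digit b k = (\<Sum>j<k. if b j = 1 then 1 else 0)"
      unfolding cum_digit_def
    proof (rule sum.cong[OF refl])
      fix x assume "x \<in> {..<k}"
      hence "b x \<in> {0,1}" using b01 kN by auto
      thus "b x = (if b x = 1 then 1 else 0)" by auto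
    qed
    also have "\<dots> = card {j\<in>{..<k}. b j = 1}"
      by (simp add: sum.If_cases Int_def conj_commute)
    also have "{j\<in>{..<k}. b j = 1} = {d\<in>D. d < k}"
      unfolding D_def digit_set_def using kN by auto
    finally show ?thesis by simp
  qed
  finally show "digit_cdf \<mu> (real k / real N) = real (cum_digit b k) / real (digit_norm N b)"
    unfolding m_def .
qed

end
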